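(* Let $\lambda$ be a partition, $\pi$ an $R_\lambda$-permutation, and $T\in\mathcal{T}_\lambda$ with $T\le Y_\lambda(\pi)$. Write $Y:=Y_\lambda(\pi)$. If there exists a box $(l,k)$ of $\lambda$ such that $Y_l(k)<m(U^{(l,k)})$, then $\pi$ is $R_\lambda$-312-containing.
   Context: Fix $n\ge1$; $[m]=\{1,\dots,m\}$. A partition is $\lambda=(\lambda_1\ge\cdots\ge\lambda_n\ge0)\in\mathbb{Z}^n$, with boxes $(j,i)$ (column $j$, row $i$), $1\le j\le\lambda_1$, $1\le i\le\zeta_j:=\#\{i:\lambda_i\ge j\}$; $R_\lambda:=\{\zeta_j:\zeta_j<n\}$ with elements $q_1<\dots<q_r$, $q_0:=0$, $q_{r+1}:=n$. An $R_\lambda$-permutation is a permutation $\pi$ of $[n]$ (one-line notation) strictly increasing on each index set $\{q_{h-1}+1,\dots,q_h\}$; it is $R_\lambda$-312-containing if there exist $h\in[r-1]$ and $1\le a\le q_h<b\le q_{h+1}<c\le n$ with $\pi_b<\pi_c<\pi_a$. A tableau of shape $\lambda$ fills the boxes with values in $[n]$, strictly increasing down columns and weakly increasing along rows; $\mathcal{T}_\lambda$ is their set, ordered entrywise. $T_j(i)$ is the entry at column $j$ row $i$. The $\lambda$-key $Y_\lambda(\pi)$ is the tableau whose column $j$ consists of $\{\pi_1,\dots,\pi_{\zeta_j}\}$ in increasing order. Scanning paths: the earliest weakly increasing subsequence (EWIS) of a sequence $x_1,x_2,\dots$ is $x_{i_1},x_{i_2},\dots$ with $i_1=1$ and $i_u$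 the smallest index $>i_{u-1}$ with $x_{i_u}\ge x_{i_{u-1}}$. For $T\in\mathcal{T}_\lambda$ and $l\in[\lambda_1]$: consider the boxes of $T$ in columns $l,\dots,\lambda_1$, initially unmarked; for $k=\zeta_l,\zeta_l-1,\dots,1$ in turn, form the sequence of the lowest unmarked entries of columns $l,l+1,\dots$ (left to right, over columns still having unmarked boxes), take its EWIS and mark the contributing boxes; this set of boxes is the scanning path $\mathcal{P}(T;l,k)$ (and the last term of the EWIS is the entry of the scanning tableau $S(T)$ at $(l,k)$). For a box $(l,k)$, $U^{(l,k)}$ is the collection of entries of $T$ in columns $l+1,\dots,\lambda_1$ at boxes not lying on any of the paths $\mathcal{P}(T;l,\zeta_l),\dots,\mathcal{P}(T;l,k+1)$; $m(U^{(l,k)})$ is the maximum of these entries, or $1$ if there are none. *)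

theory Defs
  imports "HOL-Combinatorics.Permutations"
begin

definition is_partition :: "nat \<Rightarrow> (nat \<Rightarrow> nat) \<Rightarrow> bool" where
  "is_partition n lam \<longleftrightarrow> (\<forall>i j. 1 \<le> i \<longrightarrow> i \<le> j \<longrightarrow> j \<le> n \<longrightarrow> lam j \<le> lam i)"

definition zeta :: "nat \<Rightarrow> (nat \<Rightarrow> nat) \<Rightarrow> nat \<Rightarrow> nat" where
  "zeta n lam j = card {i \<in> {1..n}. j \<le> lam i}"

(* box (j,i): column j, row i *)
definition is_box :: "nat \<Rightarrow> (nat \<Rightarrow> nat) \<Rightarrow> nat \<Rightarrow> nat \<Rightarrow> bool" where
  "is_box n lam j i \<longleftrightarrow> 1 \<le> j \<and> j \<le> lam 1 \<and> 1 \<le> i \<and> i \<le> zeta n lam j"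

definition Rset :: "nat \<Rightarrow> (nat \<Rightarrow> nat) \<Rightarrow> nat set" where
  "Rset n lam = {zeta n lam j | j. 1 \<le> j \<and> j \<le> lam 1 \<and> zeta n lam j < n}"

definition rR :: "nat \<Rightarrow> (nat \<Rightarrow> nat) \<Rightarrow> nat" where
  "rR n lam = card (Rset n lam)"

definition qseq :: "nat \<Rightarrow> (nat \<Rightarrow> nat) \<Rightarrow> nat \<Rightarrow> nat" where
  "qseq n lam h = (if h = 0 then 0
     else if h \<le> rR n lam then sorted_list_of_set (Rset n lam) ! (h - 1) else n)"

definition is_R_perm :: "nat \<Rightarrow> (nat \<Rightarrow> nat) \<Rightarrow> (nat \<Rightarrow> nat) \<Rightarrow> bool" where
  "is_R_perm n lam \<pi> \<longleftrightarrow> \<pi> permutes {1..n} \<and>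
     (\<forall>h \<in> {1..rR n lam + 1}. strict_mono_on {qseq n lam (h - 1) + 1 .. qseq n lam h} \<pi>)"

definition R_312_containing :: "nat \<Rightarrow> (nat \<Rightarrow> nat) \<Rightarrow> (nat \<Rightarrow> nat) \<Rightarrow> bool" where
  "R_312_containing n lam \<pi> \<longleftrightarrow>
     (\<exists>h a b c. 1 \<le> h \<and> h \<le> rR n lam - 1 \<and>
        1 \<le> a \<and> a \<le> qseq n lam h \<and> qseq n lam h < b \<and> b \<le> qseq n lam (h + 1) \<and>
        qseq n lam (h + 1) < c \<and> c \<le> n \<and> \<pi> b < \<pi> c \<and> \<pi> c < \<pi> a)"

(* tableaux: T j i is the entry at column j, row i *)
definition is_tableau :: "nat \<Rightarrow> (nat \<Rightarrow> nat) \<Rightarrow> (nat \<Rightarrow> nat \<Rightarrow> nat) \<Rightarrow> bool" where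
  "is_tableau n lam T \<longleftrightarrow>
     (\<forall>j i. is_box n lam j i \<longrightarrow> T j i \<in> {1..n}) \<and>
     (\<forall>j i. is_box n lam j i \<longrightarrow> is_box n lam j (i + 1) \<longrightarrow> T j i < T j (i + 1)) \<and>
     (\<forall>j i. is_box n lam j i \<longrightarrow> is_box n lam (j + 1) i \<longrightarrow> T j i \<le> T (j + 1) i)"

definition tab_le :: "nat \<Rightarrow> (nat \<Rightarrow> nat) \<Rightarrow> (nat \<Rightarrow> nat \<Rightarrow> nat) \<Rightarrow> (nat \<Rightarrow> nat \<Rightarrow> nat) \<Rightarrow> bool" where
  "tab_le n lam T S \<longleftrightarrow> (\<forall>j i. is_box n lam j i \<longrightarrow> T j i \<le> S j i)"

definition key :: "nat \<Rightarrow> (nat \<Rightarrow> nat) \<Rightarrow> (nat \<Rightarrow> nat) \<Rightarrow> nat \<Rightarrow> nat \<Rightarrow> nat" where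
  "key n lam \<pi> j i = sorted_list_of_set (\<pi> ` {1..zeta n lam j}) ! (i - 1)"

(* earliest weakly increasing subsequence, on a list of (tag, value) pairs, by value *)
fun ewis_from :: "nat \<Rightarrow> ('b \<times> nat) list \<Rightarrow> ('b \<times> nat) list" where
  "ewis_from v [] = []"
| "ewis_from v (y # ys) = (if v \<le> snd y then y # ewis_from (snd y) ys else ewis_from v ys)"

fun ewis :: "('b \<times> nat) list \<Rightarrow> ('b \<times> nat) list" where
  "ewis [] = []"
| "ewis (x # xs) = x # ewis_from (snd x) xs"

definition has_unmarked :: "nat \<Rightarrow> (nat \<Rightarrow> nat) \<Rightarrow> (nat \<times> nat) set \<Rightarrow> nat \<Rightarrow> bool" where
  "has_unmarked n lam M j \<longleftrightarrow> (\<exists>i. is_box n lam j i \<and> (j, i) \<notin> M)"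

definition lowest_unmarked :: "nat \<Rightarrow> (nat \<Rightarrow> nat) \<Rightarrow> (nat \<times> nat) set \<Rightarrow> nat \<Rightarrow> nat" where
  "lowest_unmarked n lam M j = Max {i. is_box n lam j i \<and> (j, i) \<notin> M}"

definition scan_seq :: "nat \<Rightarrow> (nat \<Rightarrow> nat) \<Rightarrow> (nat \<Rightarrow> nat \<Rightarrow> nat) \<Rightarrow> nat \<Rightarrow> (nat \<times> nat) set
    \<Rightarrow> ((nat \<times> nat) \<times> nat) list" where
  "scan_seq n lam T l M =
     map (\<lambda>j. ((j, lowest_unmarked n lam M j), T j (lowest_unmarked n lam M j)))
       (filter (has_unmarked n lam M) [l..<lam 1 + 1])"

definition scan_step :: "nat \<Rightarrow> (nat \<Rightarrow> nat) \<Rightarrow> (nat \<Rightarrow> nat \<Rightarrow> nat) \<Rightarrow> nat \<Rightarrow> (nat \<times> nat) set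
    \<Rightarrow> (nat \<times> nat) set" where
  "scan_step n lam T l M = fst ` set (ewis (scan_seq n lam T l M))"

(* set of marked boxes after t rounds (rounds k = zeta_l, zeta_l - 1, ...) *)
fun marked :: "nat \<Rightarrow> (nat \<Rightarrow> nat) \<Rightarrow> (nat \<Rightarrow> nat \<Rightarrow> nat) \<Rightarrow> nat \<Rightarrow> nat \<Rightarrow> (nat \<times> nat) set" where
  "marked n lam T l 0 = {}"
| "marked n lam T l (Suc t) = marked n lam T l t \<union> scan_step n lam T l (marked n lam T l t)"

definition scanning_path :: "nat \<Rightarrow> (nat \<Rightarrow> nat) \<Rightarrow> (nat \<Rightarrow> nat \<Rightarrow> nat) \<Rightarrow> nat \<Rightarrow> nat
    \<Rightarrow> (nat \<times> nat) set" where
  "scanning_path n lam T l k = scan_step n lam T l (marked n lam T l (zeta n lam l - k))"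

definition U_set :: "nat \<Rightarrow> (nat \<Rightarrow> nat) \<Rightarrow> (nat \<Rightarrow> nat \<Rightarrow> nat) \<Rightarrow> nat \<Rightarrow> nat \<Rightarrow> nat set" where
  "U_set n lam T l k = {T j i | j i. is_box n lam j i \<and> l + 1 \<le> j \<and>
       (j, i) \<notin> (\<Union>k' \<in> {k + 1 .. zeta n lam l}. scanning_path n lam T l k')}"

definition mU :: "nat \<Rightarrow> (nat \<Rightarrow> nat) \<Rightarrow> (nat \<Rightarrow> nat \<Rightarrow> nat) \<Rightarrow> nat \<Rightarrow> nat \<Rightarrow> nat" where
  "mU n lam T l k = (if U_set n lam T l k = {} then 1 else Max (U_set n lam T l k))"

end

theory Submission
  imports Defs
begin

lemma ssl_facts:
  assumes "finite S" defines "L \<equiv> sorted_list_of_set S"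
  shows "set L = S" "length L = card S" "sorted_wrt (<) L" "distinct L"
  using assms by auto

lemma ssl_mono:
  assumes "finite S" "i < j" "j < card S"
  shows "sorted_list_of_set S ! i < sorted_list_of_set S ! j"
  using assms by (metis sorted_list_of_set.length_sorted_key_list_of_set
      sorted_list_of_set.strict_sorted_key_list_of_set sorted_wrt_nth_less)

lemma ssl_mono_le:
  assumes "finite S" "i \<le> j" "j < card S"
  shows "sorted_list_of_set S ! i \<le> sorted_list_of_set S ! j"
  using ssl_mono[OF assms(1) _ assms(3), of i] assms(2) by (cases "i = j") auto

lemma ssl_in:
  assumes "finite S" "i < card S"
  shows "sorted_list_of_set S ! i \<in> S"
  using assms by (metis nth_mem sorted_list_of_set.length_sorted_key_list_of_set
      sorted_list_of_set.set_sorted_key_list_of_set)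

lemma ssl_index:
  assumes "finite S" "x \<in> S"
  obtains m where "m < card S" "x = sorted_list_of_set S ! m"
  using assms by (metis in_set_conv_nth sorted_list_of_set.length_sorted_key_list_of_set
      sorted_list_of_set.set_sorted_key_list_of_set)

lemma ssl_gap:
  assumes "finite S" "x \<in> S" "Suc k < card S" "sorted_list_of_set S ! k < x"
  shows "sorted_list_of_set S ! Suc k \<le> x"
proof -
  obtain m where m: "m < card S" "x = sorted_list_of_set S ! m" using ssl_index assms by blast
  have "k < m"
  proof (rule ccontr)
    assume "\<not> k < m" then have "m \<le> k" by simp
    then have "sorted_list_of_set S ! m \<le> sorted_list_of_set S ! k"
      using ssl_mono_le[OF assms(1), of m k] assms by simp
    then show False using m assms by simp
  qed
  then show ?thesis using ssl_mono_le[OF assms(1), of "Suc k" m] m by simp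
qed

lemma ssl_last:
  assumes "finite S" "x \<in> S"
  shows "x \<le> sorted_list_of_set S ! (card S - 1)"
proof -
  obtain m where m: "m < card S" "x = sorted_list_of_set S ! m" using ssl_index assms by blast
  then show ?thesis using ssl_mono_le[OF assms(1), of m "card S - 1"] by simp
qed

lemma ssl_count_eq:
  assumes "finite S" "k < card S"
  shows "card {x\<in>S. x \<le> sorted_list_of_set S ! k} = Suc k"
proof -
  let ?L = "sorted_list_of_set S"
  have "{x\<in>S. x \<le> ?L ! k} = (\<lambda>m. ?L ! m) ` {..k}"
  proof (intro set_eqI iffI)
    fix x assume "x \<in> {x\<in>S. x \<le> ?L ! k}"
    then have x: "x \<in> S" "x \<le> ?L ! k" by auto
    obtain m where m: "m < card S" "x = ?L ! m" using ssl_index[OF assms(1) x(1)] by blast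
    have "m \<le> k"
    proof (rule ccontr)
      assume "\<not> m \<le> k" then have "k < m" by simp
      then have "?L ! k < ?L ! m" using ssl_mono assms m by simp
      then show False using x m by simp
    qed
    then show "x \<in> (\<lambda>m. ?L ! m) ` {..k}" using m by auto
  next
    fix x assume "x \<in> (\<lambda>m. ?L ! m) ` {..k}"
    then obtain m where "m \<le> k" "x = ?L ! m" by auto
    moreover have "m < card S" using `m \<le> k` assms by simp
    ultimately show "x \<in> {x\<in>S. x \<le> ?L ! k}" using ssl_in[OF assms(1), of m] ssl_mono_le[OF assms(1), of m k] assms(2) by simp
  qed
  moreover have "inj_on (\<lambda>m. ?L ! m) {..k}"
  proof (rule inj_onI)
    fix a b assume ab: "a \<in> {..k}" "b \<in> {..k}" "?L ! a = ?L ! b"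
    show "a = b"
    proof (rule ccontr)
      assume "a \<noteq> b"
      then consider "a < b" | "b < a" by linarith
      then show False
      proof cases
        case 1 then show False using ssl_mono[OF assms(1), of a b] ab assms(2) by simp
      next
        case 2 then show False using ssl_mono[OF assms(1), of b a] ab assms(2) by simp
      qed
    qed
  qed
  ultimately show ?thesis using card_image by (metis card_atMost)
qed

lemma ssl_count_le:
  assumes "finite S" "k < card S" "v < sorted_list_of_set S ! k"
  shows "card {x\<in>S. x \<le> v} \<le> k"
proof -
  let ?L = "sorted_list_of_set S"
  have "{x\<in>S. x \<le> v} \<subseteq> (\<lambda>m. ?L ! m) ` {..<k}"
  proof
    fix x assume "x \<in> {x\<in>S. x \<le> v}"
    then have x: "x \<in> S" "x \<le> v" by auto
    obtain m where m: "m < card S" "x = ?L ! m" using ssl_index[OF assms(1) x(1)] by blast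
    have "m < k"
    proof (rule ccontr)
      assume "\<not> m < k" then have "k \<le> m" by simp
      then have "?L ! k \<le> ?L ! m" using ssl_mono_le assms m by simp
      then show False using x m assms by simp
    qed
    then show "x \<in> (\<lambda>m. ?L ! m) ` {..<k}" using m by auto
  qed
  then have "card {x\<in>S. x \<le> v} \<le> card ((\<lambda>m. ?L ! m) ` {..<k})"
    by (intro card_mono) auto
  also have "\<dots> \<le> k" using card_image_le[of "{..<k}"] by simp
  finally show ?thesis .
qed

lemma zeta_le_n: "zeta n lam j \<le> n"
proof -
  have "zeta n lam j \<le> card {1..n}" unfolding zeta_def by (intro card_mono) auto
  then show ?thesis by simp
qed

lemma zeta_anti: "j \<le> j' \<Longrightarrow> zeta n lam j' \<le> zeta n lam j"
  unfolding zeta_def by (intro card_mono) auto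

definition Cset :: "nat \<Rightarrow> (nat \<Rightarrow> nat) \<Rightarrow> (nat \<Rightarrow> nat) \<Rightarrow> nat \<Rightarrow> nat set" where
  "Cset n lam \<pi> j = \<pi> ` {1..zeta n lam j}"

context
  fixes n :: nat and lam :: "nat \<Rightarrow> nat" and \<pi> :: "nat \<Rightarrow> nat"
  assumes perm: "\<pi> permutes {1..n}"
begin

lemma C_fin: "finite (Cset n lam \<pi> j)" unfolding Cset_def by simp

lemma C_card: "card (Cset n lam \<pi> j) = zeta n lam j"
proof -
  have "inj_on \<pi> {1..zeta n lam j}" using permutes_inj[OF perm] by (simp add: inj_on_def inj_def)
  then show ?thesis unfolding Cset_def by (simp add: card_image)
qed

lemma C_sub: "Cset n lam \<pi> j \<subseteq> {1..n}"
proof -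
  have "Cset n lam \<pi> j \<subseteq> \<pi> ` {1..n}" unfolding Cset_def using zeta_le_n[of n lam j]
    by (intro image_mono) auto
  then show ?thesis using permutes_image[OF perm] by simp
qed

lemma C_anti: "j \<le> j' \<Longrightarrow> Cset n lam \<pi> j' \<subseteq> Cset n lam \<pi> j"
  unfolding Cset_def using zeta_anti[of j j' n lam] by (intro image_mono) auto

lemma key_eq: "key n lam \<pi> j i = sorted_list_of_set (Cset n lam \<pi> j) ! (i - 1)"
  unfolding key_def Cset_def by simp

lemma K1: "1 \<le> i \<Longrightarrow> i \<le> zeta n lam j \<Longrightarrow> key n lam \<pi> j i \<in> Cset n lam \<pi> j"
  unfolding key_eq using ssl_in[OF C_fin, of "i - 1" j] C_card[of j] by simp

lemma K1': "1 \<le> i \<Longrightarrow> i \<le> zeta n lam j \<Longrightarrow> key n lam \<pi> j i \<in> {1..n}"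
  using K1 C_sub by blast

lemma K2: "1 \<le> i \<Longrightarrow> i < i' \<Longrightarrow> i' \<le> zeta n lam j \<Longrightarrow> key n lam \<pi> j i < key n lam \<pi> j i'"
  unfolding key_eq using ssl_mono[OF C_fin, of "i - 1" "i' - 1" j] C_card[of j] by simp

lemma K3: "x \<in> Cset n lam \<pi> l \<Longrightarrow> 1 \<le> k \<Longrightarrow> k < zeta n lam l \<Longrightarrow> key n lam \<pi> l k < x
   \<Longrightarrow> key n lam \<pi> l (Suc k) \<le> x"
  unfolding key_eq using ssl_gap[OF C_fin, of x l "k - 1"] C_card[of l] by simp

lemma K4: "1 \<le> k \<Longrightarrow> k \<le> zeta n lam l \<Longrightarrow>
    card {x\<in>Cset n lam \<pi> l. x \<le> key n lam \<pi> l k} = k"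
  unfolding key_eq using ssl_count_eq[OF C_fin, of "k - 1" l] C_card[of l] by simp

lemma K5: "1 \<le> i \<Longrightarrow> i \<le> zeta n lam j \<Longrightarrow> v < key n lam \<pi> j i \<Longrightarrow>
    card {x\<in>Cset n lam \<pi> j. x \<le> v} \<le> i - 1"
  unfolding key_eq using ssl_count_le[OF C_fin, of "i - 1" j v] C_card[of j] by simp

lemma K6: "x \<in> Cset n lam \<pi> l \<Longrightarrow> x \<le> key n lam \<pi> l (zeta n lam l)"
proof -
  assume x: "x \<in> Cset n lam \<pi> l"
  then have "Cset n lam \<pi> l \<noteq> {}" by auto
  then have "zeta n lam l \<ge> 1" using C_card[of l] C_fin[of l] by (metis One_nat_def Suc_leI card_gt_0_iff)
  then show ?thesis unfolding key_eq using ssl_last[OF C_fin x] C_card[of l] by simp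
qed

end


section \<open>312 lemma\<close>

lemma discrete_ivt:
  fixes f :: "nat \<Rightarrow> nat"
  shows "f a < y \<Longrightarrow> y \<le> f b \<Longrightarrow> a < b \<Longrightarrow> \<exists>i. a \<le> i \<and> i < b \<and> f i < y \<and> y \<le> f (Suc i)"
proof (induction b)
  case 0 then show ?case by simp
next
  case (Suc b)
  show ?case
  proof (cases "a = b")
    case True then show ?thesis using Suc.prems by auto
  next
    case False
    then have "a < b" using Suc.prems by simp
    show ?thesis
    proof (cases "y \<le> f b")
      case True then show ?thesis using Suc.IH[OF Suc.prems(1) True \<open>a < b\<close>] by auto
    next
      case False then show ?thesis using Suc.prems \<open>a < b\<close> by (intro exI[of _ b]) auto
    qed
  qed
qed

lemma Rset_fin: "finite (Rset n lam)"
proof -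
  have "Rset n lam \<subseteq> zeta n lam ` {1..lam 1}" unfolding Rset_def by auto
  then show ?thesis using finite_subset by blast
qed

lemma Q312:
  assumes "A \<in> Rset n lam" "B \<in> Rset n lam" "1 \<le> x" "x \<le> A" "A < y" "y \<le> B" "B < z" "z \<le> n"
    "\<pi> y < \<pi> z" "\<pi> z < \<pi> x"
  shows "R_312_containing n lam \<pi>"
proof -
  let ?L = "sorted_list_of_set (Rset n lam)"
  have fin: "finite (Rset n lam)" by (rule Rset_fin)
  have r: "rR n lam = card (Rset n lam)" unfolding rR_def by simp
  obtain \<alpha> where a: "\<alpha> < card (Rset n lam)" "A = ?L ! \<alpha>" using ssl_index[OF fin assms(1)] by blast
  obtain \<beta> where b: "\<beta> < card (Rset n lam)" "B = ?L ! \<beta>" using ssl_index[OF fin assms(2)] by blast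
  have "\<alpha> < \<beta>"
  proof (rule ccontr)
    assume "\<not> \<alpha> < \<beta>" then have "\<beta> \<le> \<alpha>" by simp
    then have "?L ! \<beta> \<le> ?L ! \<alpha>" using ssl_mono_le[OF fin _ a(1)] by simp
    then show False using a b assms(5,6) by simp
  qed
  obtain i where i: "\<alpha> \<le> i" "i < \<beta>" "?L ! i < y" "y \<le> ?L ! (Suc i)"
    using discrete_ivt[of "\<lambda>i. ?L ! i" \<alpha> y \<beta>] a b assms(5,6) \<open>\<alpha> < \<beta>\<close> by auto
  have q1: "qseq n lam (Suc i) = ?L ! i" unfolding qseq_def using i b r by simp
  have q2: "qseq n lam (Suc i + 1) = ?L ! Suc i" unfolding qseq_def using i b r by simp
  have m1: "A \<le> ?L ! i" using a ssl_mono_le[OF fin i(1)] i b by simp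
  have m2: "?L ! Suc i \<le> B" using b ssl_mono_le[OF fin, of "Suc i" \<beta>] i by simp
  show ?thesis unfolding R_312_containing_def
    apply (rule exI[of _ "Suc i"], rule exI[of _ x], rule exI[of _ y], rule exI[of _ z])
    using q1 q2 m1 m2 i b r assms by simp
qed


lemma C312:
  assumes perm: "\<pi> permutes {1..n}" and "1 \<le> l" "l \<le> j" "j \<le> lam 1"
    "a \<in> Cset n lam \<pi> j" "b \<in> Cset n lam \<pi> l" "b \<notin> Cset n lam \<pi> j"
    "e \<in> {1..n}" "e \<notin> Cset n lam \<pi> l" "b < e" "e < a"
  shows "R_312_containing n lam \<pi>"
proof -
  obtain x where x: "x \<in> {1..zeta n lam j}" "a = \<pi> x" using assms(5) unfolding Cset_def by auto
  obtain y where y: "y \<in> {1..zeta n lam l}" "b = \<pi> y" using assms(6) unfolding Cset_def by auto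
  have "e \<in> \<pi> ` {1..n}" using permutes_image[OF perm] assms(8) by simp
  then obtain z where z: "z \<in> {1..n}" "e = \<pi> z" by auto
  have yj: "zeta n lam j < y" using y assms(7) unfolding Cset_def by force
  have zl: "zeta n lam l < z" using z assms(9) unfolding Cset_def by force
  have "zeta n lam l \<in> Rset n lam" unfolding Rset_def using assms zl z by auto
  moreover have "zeta n lam j \<in> Rset n lam" unfolding Rset_def using assms zl z yj y by auto
  ultimately show ?thesis
    using Q312[of "zeta n lam j" n lam "zeta n lam l" x y z \<pi>] x y z yj zl assms by auto
qed

lemma ewis_eq: "ewis xs = ewis_from 0 xs"
  by (cases xs) auto

lemma ewis_sub: "set (ewis_from v xs) \<subseteq> set xs"
  by (induction v xs rule: ewis_from.induct) auto

lemma ewis_prefix: "sorted (v # map snd xs) \<Longrightarrow> set xs \<subseteq> set (ewis_from v (xs @ zs))"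
  by (induction xs arbitrary: v) auto

lemma ewis_skip: "y \<in> set xs \<Longrightarrow> y \<notin> set (ewis_from v xs) \<Longrightarrow> v \<le> B \<Longrightarrow>
    (\<forall>z\<in>set xs. snd z \<le> B) \<Longrightarrow> snd y < B"
proof (induction xs arbitrary: v)
  case Nil then show ?case by simp
next
  case (Cons x xs)
  show ?case
  proof (cases "v \<le> snd x")
    case True
    then show ?thesis using Cons.IH[of "snd x"] Cons.prems by auto
  next
    case False
    then show ?thesis using Cons.IH[of v] Cons.prems by (cases "y = x") auto
  qed
qed

lemma ewis_adj: "distinct (as @ x # y # bs) \<Longrightarrow> x \<in> set (ewis_from v (as @ x # y # bs)) \<Longrightarrow>
    snd x \<le> snd y \<Longrightarrow> y \<in> set (ewis_from v (as @ x # y # bs))"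
proof (induction as arbitrary: v)
  case Nil
  then show ?case using ewis_sub[of "snd y" bs] ewis_sub[of v bs] by (auto split: if_splits)
next
  case (Cons a as)
  then show ?case by (auto split: if_splits)
qed


section \<open>Scanning as regions\<close>

definition region :: "nat \<Rightarrow> (nat \<Rightarrow> nat) \<Rightarrow> nat \<Rightarrow> (nat \<Rightarrow> nat) \<Rightarrow> (nat \<times> nat) set" where
  "region n lam l u = {(j,i). l \<le> j \<and> j \<le> lam 1 \<and> u j < i \<and> i \<le> zeta n lam j}"

definition sseq :: "nat \<Rightarrow> (nat \<Rightarrow> nat) \<Rightarrow> (nat \<Rightarrow> nat \<Rightarrow> nat) \<Rightarrow> nat \<Rightarrow> (nat \<Rightarrow> nat)
    \<Rightarrow> ((nat \<times> nat) \<times> nat) list" where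
  "sseq n lam T l u = map (\<lambda>j. ((j, u j), T j (u j))) (filter (\<lambda>j. 1 \<le> u j) [l..<lam 1 + 1])"

fun uu :: "nat \<Rightarrow> (nat \<Rightarrow> nat) \<Rightarrow> (nat \<Rightarrow> nat \<Rightarrow> nat) \<Rightarrow> nat \<Rightarrow> nat \<Rightarrow> nat \<Rightarrow> nat" where
  "uu n lam T l 0 j = zeta n lam j"
| "uu n lam T l (Suc t) j = (if 1 \<le> uu n lam T l t j \<and>
      ((j, uu n lam T l t j), T j (uu n lam T l t j)) \<in> set (ewis_from 0 (sseq n lam T l (uu n lam T l t)))
    then uu n lam T l t j - 1 else uu n lam T l t j)"

lemma unm_set:
  assumes "1 \<le> l" "l \<le> j" "j \<le> lam 1" "u j \<le> zeta n lam j"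
  shows "{i. is_box n lam j i \<and> (j,i) \<notin> region n lam l u} = {1..u j}"
  using assms unfolding is_box_def region_def by auto

lemma scan_seq_region:
  assumes "1 \<le> l" "\<forall>j. u j \<le> zeta n lam j"
  shows "scan_seq n lam T l (region n lam l u) = sseq n lam T l u"
proof -
  have hu: "has_unmarked n lam (region n lam l u) j = (1 \<le> u j)" if "j \<in> set [l..<lam 1 + 1]" for j
  proof -
    have "{i. is_box n lam j i \<and> (j,i) \<notin> region n lam l u} = {1..u j}"
      using assms that by (intro unm_set) auto
    moreover have "has_unmarked n lam (region n lam l u) j = ({i. is_box n lam j i \<and> (j,i) \<notin> region n lam l u} \<noteq> {})"
      unfolding has_unmarked_def by blast
    ultimately show ?thesis by simp
  qed
  have lu: "lowest_unmarked n lam (region n lam l u) j = u j"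
    if "j \<in> set (filter (\<lambda>j. 1 \<le> u j) [l..<lam 1 + 1])" for j
  proof -
    have "{i. is_box n lam j i \<and> (j,i) \<notin> region n lam l u} = {1..u j}"
      using assms that by (intro unm_set) auto
    moreover have "Max {1..u j} = u j" using that by (intro Max_eqI) auto
    ultimately show ?thesis unfolding lowest_unmarked_def by simp
  qed
  have "filter (has_unmarked n lam (region n lam l u)) [l..<lam 1 + 1] = filter (\<lambda>j. 1 \<le> u j) [l..<lam 1 + 1]"
    using hu by (intro filter_cong) auto
  then show ?thesis unfolding scan_seq_def sseq_def using lu by (simp cong: map_cong)
qed

lemma sseq_set: "set (sseq n lam T l u) = {((j, u j), T j (u j)) | j. l \<le> j \<and> j \<le> lam 1 \<and> 1 \<le> u j}"
  unfolding sseq_def by auto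

lemma sseq_distinct: "distinct (sseq n lam T l u)"
  unfolding sseq_def by (auto simp: distinct_map inj_on_def)

lemma scan_step_region:
  assumes "1 \<le> l" "\<forall>j. u j \<le> zeta n lam j"
  shows "scan_step n lam T l (region n lam l u) = fst ` set (ewis_from 0 (sseq n lam T l u))"
  unfolding scan_step_def scan_seq_region[OF assms] ewis_eq by simp

lemma pick_mem:
  assumes "(j, w) \<in> fst ` set (ewis_from 0 (sseq n lam T l u))"
  shows "w = u j \<and> l \<le> j \<and> j \<le> lam 1 \<and> 1 \<le> u j \<and>
     ((j, u j), T j (u j)) \<in> set (ewis_from 0 (sseq n lam T l u))"
proof -
  obtain v where v: "((j,w), v) \<in> set (ewis_from 0 (sseq n lam T l u))" using assms by force
  then have "((j,w), v) \<in> set (sseq n lam T l u)" using ewis_sub by blast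
  then have "w = u j \<and> v = T j (u j) \<and> l \<le> j \<and> j \<le> lam 1 \<and> 1 \<le> u j"
    unfolding sseq_set by auto
  then show ?thesis using v by auto
qed

lemma marked_region:
  assumes "1 \<le> l"
  shows "marked n lam T l t = region n lam l (uu n lam T l t) \<and> (\<forall>j. uu n lam T l t j \<le> zeta n lam j)"
proof (induction t)
  case 0
  then show ?case unfolding region_def by auto
next
  case (Suc t)
  let ?u = "uu n lam T l t"
  let ?E = "set (ewis_from 0 (sseq n lam T l ?u))"
  have M: "marked n lam T l t = region n lam l ?u" and bd: "\<forall>j. ?u j \<le> zeta n lam j" using Suc by auto
  have S: "scan_step n lam T l (marked n lam T l t) = fst ` ?E"
    using M scan_step_region[OF assms bd] by simp
  have eq: "region n lam l ?u \<union> fst ` ?E = region n lam l (uu n lam T l (Suc t))"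
  proof (intro set_eqI iffI)
    fix x assume "x \<in> region n lam l ?u \<union> fst ` ?E"
    then consider "x \<in> region n lam l ?u" | "x \<in> fst ` ?E" by blast
    then show "x \<in> region n lam l (uu n lam T l (Suc t))"
    proof cases
      case 1 then show ?thesis unfolding region_def by auto
    next
      case 2
      obtain j w where x: "x = (j,w)" by fastforce
      then show ?thesis using pick_mem[of j w n lam T l ?u] 2 bd unfolding region_def by auto
    qed
  next
    fix x assume x: "x \<in> region n lam l (uu n lam T l (Suc t))"
    obtain j i where ji: "x = (j,i)" by fastforce
    show "x \<in> region n lam l ?u \<union> fst ` ?E"
    proof (cases "1 \<le> ?u j \<and> ((j, ?u j), T j (?u j)) \<in> ?E")
      case True
      then have "(j, ?u j) \<in> fst ` ?E" by force
      then show ?thesis using x True ji unfolding region_def by (cases "i = ?u j") auto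
    next
      case False
      then show ?thesis using x ji unfolding region_def by auto
    qed
  qed
  have mk: "marked n lam T l (Suc t) = region n lam l (uu n lam T l (Suc t))"
    using M S eq by (simp del: uu.simps)
  have "uu n lam T l (Suc t) j \<le> zeta n lam j" for j
  proof -
    have "?u j \<le> zeta n lam j" using bd by blast
    then show ?thesis by auto
  qed
  then show ?case using mk by blast
qed


lemma upt_split: "l \<le> j \<Longrightarrow> j < m \<Longrightarrow> [l..<m] = [l..<j] @ j # [Suc j..<m]"
  using upt_add_eq_append[of l j "m - j"] upt_conv_Cons[of j m] by simp

lemma upt_split2: "l \<le> j \<Longrightarrow> j \<le> m \<Longrightarrow> [l..<m] = [l..<j] @ [j..<m]"
  using upt_add_eq_append[of l j "m - j"] by simp

lemma row_le: "is_tableau n lam T \<Longrightarrow> is_box n lam j i \<Longrightarrow> is_box n lam (Suc j) i \<Longrightarrow> T j i \<le> T (Suc j) i"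
  unfolding is_tableau_def by simp

lemma col_mono: assumes "is_tableau n lam T" "is_box n lam j i'" "1 \<le> i" "i \<le> i'"
  shows "T j i \<le> T j i'"
  using assms(4,2)
proof (induction i' rule: dec_induct)
  case base then show ?case by simp
next
  case (step m)
  have "is_box n lam j m" "is_box n lam j (m + 1)" using step assms(3) unfolding is_box_def by auto
  then have "T j m < T j (m + 1)" using assms(1) unfolding is_tableau_def by blast
  moreover have "T j i \<le> T j m" using step assms(3) unfolding is_box_def by auto
  ultimately show ?case by simp
qed

lemma uu_cases: "uu n lam T l (Suc t) j = uu n lam T l t j \<or> uu n lam T l (Suc t) j = uu n lam T l t j - 1"
  by simp

lemma uu_le_prev: "uu n lam T l (Suc t) j \<le> uu n lam T l t j"
  by simp

lemma shape:
  assumes l1: "1 \<le> l" and ll: "l \<le> lam 1" and tab: "is_tableau n lam T" and t: "t \<le> zeta n lam l"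
  shows "uu n lam T l t l = zeta n lam l - t \<and>
     (\<forall>j. l \<le> j \<longrightarrow> j < lam 1 \<longrightarrow> uu n lam T l t (Suc j) \<le> uu n lam T l t j)"
  using t
proof (induction t)
  case 0
  then show ?case using zeta_anti[of _ "Suc _" n lam] by simp
next
  case (Suc t)
  let ?u = "uu n lam T l t"
  let ?P = "\<lambda>j. 1 \<le> ?u j"
  let ?f = "\<lambda>j. ((j, ?u j), T j (?u j))"
  let ?E = "set (ewis_from 0 (sseq n lam T l ?u))"
  have IH: "?u l = zeta n lam l - t" "\<And>j. l \<le> j \<Longrightarrow> j < lam 1 \<Longrightarrow> ?u (Suc j) \<le> ?u j"
    using Suc by auto
  have bd: "\<And>j. ?u j \<le> zeta n lam j" using marked_region[OF l1] by blast
  have pl: "?P l" using IH Suc.prems by simp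
  have "sseq n lam T l ?u = ?f l # map ?f (filter ?P [Suc l..<lam 1 + 1])"
    unfolding sseq_def using upt_conv_Cons[of l "lam 1 + 1"] ll pl by simp
  then have "?f l \<in> ?E" by simp
  then have A: "uu n lam T l (Suc t) l = zeta n lam l - Suc t" using IH pl by simp
  have B: "uu n lam T l (Suc t) (Suc j) \<le> uu n lam T l (Suc t) j" if j: "l \<le> j" "j < lam 1" for j
  proof -
    have le: "?u (Suc j) \<le> ?u j" using IH(2) j by blast
    show ?thesis
    proof (cases "?u (Suc j) < ?u j")
      case True
      then show ?thesis using uu_le_prev[of n lam T l t "Suc j"] uu_cases[of n lam T l t j] by linarith
    next
      case False
      then have eq: "?u (Suc j) = ?u j" using le by simp
      show ?thesis
      proof (cases "?P j \<and> ?f j \<in> ?E")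
        case False
        then have "uu n lam T l (Suc t) j = ?u j" by (simp only: uu.simps if_False)
        then show ?thesis using uu_le_prev[of n lam T l t "Suc j"] eq by simp
      next
        case True
        have dec: "[l..<lam 1 + 1] = [l..<j] @ j # Suc j # [Suc (Suc j)..<lam 1 + 1]"
          using upt_split[of l j "lam 1 + 1"] upt_conv_Cons[of "Suc j" "lam 1 + 1"] j by simp
        have Pj: "?P (Suc j)" using True eq by simp
        have sq: "sseq n lam T l ?u = map ?f (filter ?P [l..<j]) @ ?f j # ?f (Suc j) #
            map ?f (filter ?P [Suc (Suc j)..<lam 1 + 1])"
          unfolding sseq_def dec using True Pj by simp
        have bj: "is_box n lam j (?u j)" unfolding is_box_def using j l1 True bd[of j] by simp
        have bj': "is_box n lam (Suc j) (?u j)" unfolding is_box_def using j l1 True bd[of "Suc j"] eq by simp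
        have "T j (?u j) \<le> T (Suc j) (?u j)" using row_le[OF tab bj bj'] .
        then have "snd (?f j) \<le> snd (?f (Suc j))" using eq by simp
        then have "?f (Suc j) \<in> ?E"
          using ewis_adj[of "map ?f (filter ?P [l..<j])" "?f j" "?f (Suc j)"
              "map ?f (filter ?P [Suc (Suc j)..<lam 1 + 1])" 0] sseq_distinct[of n lam T l ?u] sq True
          by simp
        then show ?thesis using True eq Pj by simp
      qed
    qed
  qed
  show ?case using A B by blast
qed


lemma sorted_map_upt:
  assumes "\<And>x. a \<le> x \<Longrightarrow> Suc x < b \<Longrightarrow> g x \<le> g (Suc x)"
  shows "sorted (map g [a..<b])"
proof -
  have mono: "g x \<le> g y" if "a \<le> x" "x \<le> y" "y < b" for x y
    using that(2,3)
  proof (induction y rule: dec_induct)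
    case base then show ?case by simp
  next
    case (step m)
    have "g x \<le> g m" using step by simp
    moreover have "g m \<le> g (Suc m)" using assms[of m] that(1) step by simp
    ultimately show ?case by simp
  qed
  show ?thesis unfolding sorted_iff_nth_mono
    by (auto intro!: mono)
qed

lemma chain_le:
  assumes l1: "1 \<le> l" and ll: "l \<le> lam 1" and tab: "is_tableau n lam T" and t: "t \<le> zeta n lam l"
    and "l \<le> j'" "j' \<le> j" "j \<le> lam 1"
  shows "uu n lam T l t j \<le> uu n lam T l t j'"
  using assms(6,7)
proof (induction j rule: dec_induct)
  case base then show ?case by simp
next
  case (step m)
  then have "uu n lam T l t (Suc m) \<le> uu n lam T l t m" using shape[OF l1 ll tab t] assms(5) by auto
  then show ?case using step by simp
qed

lemma marked_union: "marked n lam T l t = (\<Union>t'<t. scan_step n lam T l (marked n lam T l t'))"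
  by (induction t) (auto simp: lessThan_Suc)

context
  fixes n :: nat and lam :: "nat \<Rightarrow> nat" and \<pi> :: "nat \<Rightarrow> nat" and T :: "nat \<Rightarrow> nat \<Rightarrow> nat" and l :: nat
  assumes perm: "\<pi> permutes {1..n}" and tab: "is_tableau n lam T"
    and tle: "tab_le n lam T (key n lam \<pi>)" and l1: "1 \<le> l" and ll: "l \<le> lam 1"
    and no312: "\<not> R_312_containing n lam \<pi>"
begin

lemma inv:
  "t < zeta n lam l \<Longrightarrow> \<forall>j i. l < j \<longrightarrow> j \<le> lam 1 \<longrightarrow> 1 \<le> i \<longrightarrow> i \<le> uu n lam T l t j
     \<longrightarrow> T j i \<le> key n lam \<pi> l (zeta n lam l - t)"
proof (induction t)
  case 0
  show ?case
  proof (intro allI impI)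
    fix j i assume ji: "l < j" "j \<le> lam 1" "1 \<le> i" "i \<le> uu n lam T l 0 j"
    then have bx: "is_box n lam j i" unfolding is_box_def using l1 by simp
    then have "T j i \<le> key n lam \<pi> j i" using tle unfolding tab_le_def by blast
    also have "\<dots> \<le> key n lam \<pi> l (zeta n lam l)"
      using K6[OF perm, where lam=lam and l=l] K1[OF perm, where i=i and j=j and lam=lam] C_anti[OF perm, where j=l and j'=j and lam=lam] ji by auto
    finally show "T j i \<le> key n lam \<pi> l (zeta n lam l - 0)" by simp
  qed
next
  case (Suc t)
  define p where "p = zeta n lam l"
  define k where "k = p - Suc t"
  let ?Y = "key n lam \<pi>"
  let ?u = "uu n lam T l t"
  let ?P = "\<lambda>j. 1 \<le> ?u j"
  let ?f = "\<lambda>j. ((j, ?u j), T j (?u j))"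
  let ?E = "set (ewis_from 0 (sseq n lam T l ?u))"
  let ?C = "Cset n lam \<pi>"
  have tp: "Suc t < p" using Suc.prems p_def by simp
  have k1: "1 \<le> k" "k < p" "p - t = Suc k" using tp k_def by auto
  have IH: "\<And>j i. l < j \<Longrightarrow> j \<le> lam 1 \<Longrightarrow> 1 \<le> i \<Longrightarrow> i \<le> ?u j \<Longrightarrow> T j i \<le> ?Y l (Suc k)"
    using Suc.IH tp k1 p_def by auto
  have shp: "?u l = p - t" using shape[OF l1 ll tab, of t] tp p_def by simp
  have bd: "\<And>j. uu n lam T l t' j \<le> zeta n lam j" for t' using marked_region[OF l1] by blast
  show ?case
  proof (intro allI impI)
    fix j i assume ji: "l < j" "j \<le> lam 1" "1 \<le> i" "i \<le> uu n lam T l (Suc t) j"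
    define u' where "u' = uu n lam T l (Suc t) j"
    have u'1: "1 \<le> u'" using ji u'_def by simp
    have bxu': "is_box n lam j u'" unfolding is_box_def using ji l1 bd[of "Suc t" j] u'_def by simp
    have Ti: "T j i \<le> T j u'" using col_mono[OF tab bxu' ji(3)] ji u'_def by simp
    have "T j u' \<le> ?Y l k"
    proof (rule ccontr)
      assume "\<not> T j u' \<le> ?Y l k"
      then have eb: "?Y l k < T j u'" by simp
      define e where "e = T j u'"
      define a where "a = ?Y j u'"
      have ea: "e \<le> a" using tle bxu' unfolding tab_le_def e_def a_def by blast
      have aC: "a \<in> ?C j" using K1[OF perm u'1, where j=j and lam=lam] bxu' unfolding is_box_def a_def by simp
      have aCl: "a \<in> ?C l" using aC C_anti[OF perm, where j=l and j'=j and lam=lam] ji by auto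
      have ya: "?Y l (Suc k) \<le> a" using K3[OF perm aCl k1(1)] k1 eb ea e_def p_def by simp
      have fE: "?f j \<in> ?E \<Longrightarrow> ?P j"
      proof -
        assume "?f j \<in> ?E"
        then have "?f j \<in> set (sseq n lam T l ?u)" using ewis_sub by blast
        then show "?P j" unfolding sseq_set by auto
      qed
      have picked_or: "(u' = ?u j - 1 \<and> ?P j \<and> ?f j \<in> ?E) \<or> (u' = ?u j \<and> ?f j \<notin> ?E)"
        unfolding u'_def using fE by auto
      have ey: "e < ?Y l (Suc k)"
      proof (cases "u' = ?u j - 1 \<and> ?P j \<and> ?f j \<in> ?E")
        case True
        then have "?u j = Suc u'" using u'1 by simp
        then have bx2: "is_box n lam j (Suc u')" using bd[of t j] bxu' unfolding is_box_def by simp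
        have "T j u' < T j (u' + 1)" using tab bxu' bx2 unfolding is_tableau_def by simp
        moreover have "T j (Suc u') \<le> ?Y l (Suc k)" using IH[of j "Suc u'"] ji \<open>?u j = Suc u'\<close> by simp
        ultimately show ?thesis unfolding e_def by simp
      next
        case False
        then have nE: "u' = ?u j" "?f j \<notin> ?E" using picked_or by auto
        have inS: "?f j \<in> set (sseq n lam T l ?u)" unfolding sseq_set using ji nE u'1 by auto
        have allB: "\<forall>z\<in>set (sseq n lam T l ?u). snd z \<le> ?Y l (Suc k)"
        proof
          fix z assume "z \<in> set (sseq n lam T l ?u)"
          then obtain j'' where z: "z = ?f j''" "l \<le> j''" "j'' \<le> lam 1" "1 \<le> ?u j''"
            unfolding sseq_set by auto
          show "snd z \<le> ?Y l (Suc k)"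
          proof (cases "j'' = l")
            case True
            have "is_box n lam l (p - t)" unfolding is_box_def using l1 ll tp p_def by simp
            then have "T l (p - t) \<le> ?Y l (p - t)" using tle unfolding tab_le_def by blast
            then show ?thesis using z True shp k1 by simp
          next
            case False
            then show ?thesis using IH[of j'' "?u j''"] z by simp
          qed
        qed
        show ?thesis using ewis_skip[OF inS nE(2) _ allB] nE unfolding e_def by simp
      qed
      have eC: "e \<notin> ?C l"
      proof
        assume "e \<in> ?C l"
        then have "?Y l (Suc k) \<le> e" using K3[OF perm _ k1(1)] k1 eb e_def p_def by simp
        then show False using ey by simp
      qed
      have en: "e \<in> {1..n}" using tab bxu' unfolding is_tableau_def e_def by blast
      have "\<exists>b\<in>?C l. b \<notin> ?C j \<and> b < e"
      proof (rule ccontr)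
        assume "\<not> (\<exists>b\<in>?C l. b \<notin> ?C j \<and> b < e)"
        then have sub: "{x\<in>?C l. x \<le> ?Y l k} \<subseteq> {x\<in>?C j. x \<le> ?Y l k}" using eb e_def by force
        have "k = card {x\<in>?C l. x \<le> ?Y l k}" using K4[OF perm k1(1), where l=l and lam=lam] k1 p_def by simp
        also have "\<dots> \<le> card {x\<in>?C j. x \<le> ?Y l k}" using sub C_fin[OF perm] by (intro card_mono) auto
        also have "\<dots> \<le> u' - 1" using K5[OF perm u'1, where j=j and lam=lam and v="key n lam \<pi> l k"] bxu' eb ea
          unfolding is_box_def e_def a_def by simp
        finally have ku: "p - t \<le> u'" using k1 u'1 by simp
        have ch: "?u j \<le> ?u l" using chain_le[OF l1 ll tab, of t l j] tp ji p_def by simp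
        show False
        proof (cases "u' = ?u j - 1 \<and> ?P j \<and> ?f j \<in> ?E")
          case True
          then have "u' = ?u j - 1" "1 \<le> ?u j" by auto
          then show ?thesis using ku ch shp by linarith
        next
          case False
          then have nE: "u' = ?u j" "?f j \<notin> ?E" using picked_or by auto
          have sq: "\<And>j''. l \<le> j'' \<Longrightarrow> j'' \<le> j \<Longrightarrow> ?u j'' = p - t"
          proof -
            fix j'' assume "l \<le> j''" "j'' \<le> j"
            then have "?u j \<le> ?u j''" "?u j'' \<le> ?u l"
              using chain_le[OF l1 ll tab, of t] tp ji p_def by auto
            then show "?u j'' = p - t" using ku nE shp by simp
          qed
          have pre: "filter ?P [l..<Suc j] = [l..<Suc j]"
            using sq k1 by (intro filter_True) auto
          have sseq_eq: "sseq n lam T l ?u = map ?f [l..<Suc j] @ map ?f (filter ?P [Suc j..<lam 1 + 1])"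
          proof -
            have eqL: "[l..<lam 1 + 1] = [l..<Suc j] @ [Suc j..<lam 1 + 1]"
              using upt_split2[of l "Suc j" "lam 1 + 1"] ji by simp
            show ?thesis unfolding sseq_def by (simp only: eqL filter_append pre map_append)
          qed
          have srt: "sorted (0 # map snd (map ?f [l..<Suc j]))"
          proof -
            have "sorted (map (\<lambda>x. T x (p - t)) [l..<Suc j])"
            proof (rule sorted_map_upt)
              fix x assume x: "l \<le> x" "Suc x < Suc j"
              have "is_box n lam x (p - t)" "is_box n lam (Suc x) (p - t)"
                unfolding is_box_def using x sq[of x] sq[of "Suc x"] bd[of t x] bd[of t "Suc x"] l1 ji k1
                by auto
              then show "T x (p - t) \<le> T (Suc x) (p - t)" using row_le[OF tab] by blast
            qed
            moreover have "map snd (map ?f [l..<Suc j]) = map (\<lambda>x. T x (p - t)) [l..<Suc j]"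
              using sq by (auto intro!: map_cong simp del: upt_Suc)
            ultimately have "sorted (map snd (map ?f [l..<Suc j]))" by (simp only:)
            then show ?thesis by (simp del: upt_Suc map_map)
          qed
          have "?f j \<in> ?E" using ewis_prefix[OF srt, of "map ?f (filter ?P [Suc j..<lam 1 + 1])"]
              sseq_eq ji by auto
          then show False using nE by simp
        qed
      qed
      then obtain b where b: "b \<in> ?C l" "b \<notin> ?C j" "b < e" by blast
      have "R_312_containing n lam \<pi>"
        using C312[OF perm l1 _ ji(2) aC b(1) b(2) en eC b(3)] ji ey ya by simp
      then show False using no312 by simp
    qed
    then show "T j i \<le> ?Y l (zeta n lam l - Suc t)" using Ti k_def p_def by simp
  qed
qed

end


theorem proposition6p2:
  fixes n :: nat and lam :: "nat \<Rightarrow> nat" and \<pi> :: "nat \<Rightarrow> nat" and T :: "nat \<Rightarrow> nat \<Rightarrow> nat"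
  assumes "1 \<le> n"
    and "is_partition n lam"
    and "is_R_perm n lam \<pi>"
    and "is_tableau n lam T"
    and "tab_le n lam T (key n lam \<pi>)"
    and "\<exists>l k. is_box n lam l k \<and> key n lam \<pi> l k < mU n lam T l k"
  shows "R_312_containing n lam \<pi>"
proof (rule ccontr)
  assume no312: "\<not> R_312_containing n lam \<pi>"
  have perm: "\<pi> permutes {1..n}" using assms(3) unfolding is_R_perm_def by simp
  obtain l k where lk: "is_box n lam l k" "key n lam \<pi> l k < mU n lam T l k" using assms(6) by blast
  have l1: "1 \<le> l" and ll: "l \<le> lam 1" and k1: "1 \<le> k" and kp: "k \<le> zeta n lam l"
    using lk(1) unfolding is_box_def by auto
  define p where "p = zeta n lam l"
  define t where "t = p - k"
  have tp: "t < p" using k1 kp p_def t_def by simp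
  have I: "\<And>j i. l < j \<Longrightarrow> j \<le> lam 1 \<Longrightarrow> 1 \<le> i \<Longrightarrow> i \<le> uu n lam T l t j
     \<Longrightarrow> T j i \<le> key n lam \<pi> l k"
    using inv[OF perm assms(4) assms(5) l1 ll no312 tp[unfolded p_def]] kp t_def p_def by auto
  have un: "(\<Union>k' \<in> {k + 1 .. zeta n lam l}. scanning_path n lam T l k') = marked n lam T l t"
  proof -
    have "(\<Union>k' \<in> {k + 1 .. zeta n lam l}. scanning_path n lam T l k')
        = (\<Union>t'<t. scan_step n lam T l (marked n lam T l t'))"
    proof (intro set_eqI iffI)
      fix x assume "x \<in> (\<Union>k' \<in> {k + 1 .. zeta n lam l}. scanning_path n lam T l k')"
      then obtain k' where "k' \<in> {k + 1 .. p}" "x \<in> scan_step n lam T l (marked n lam T l (p - k'))"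
        unfolding scanning_path_def p_def by auto
      then show "x \<in> (\<Union>t'<t. scan_step n lam T l (marked n lam T l t'))"
        using t_def by (intro UN_I[of "p - k'"]) auto
    next
      fix x assume "x \<in> (\<Union>t'<t. scan_step n lam T l (marked n lam T l t'))"
      then obtain t' where t': "t' < t" "x \<in> scan_step n lam T l (marked n lam T l t')" by auto
      then have "x \<in> scanning_path n lam T l (p - t')" unfolding scanning_path_def
        using t_def p_def kp by (simp add: diff_diff_cancel)
      then show "x \<in> (\<Union>k' \<in> {k + 1 .. zeta n lam l}. scanning_path n lam T l k')"
        using t' t_def p_def kp by (intro UN_I[of "p - t'"]) auto
    qed
    then show ?thesis using marked_union by metis
  qed
  have Ubd: "\<forall>x\<in>U_set n lam T l k. x \<le> key n lam \<pi> l k"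
  proof
    fix x assume "x \<in> U_set n lam T l k"
    then obtain j i where ji: "x = T j i" "is_box n lam j i" "l + 1 \<le> j"
        "(j, i) \<notin> marked n lam T l t"
      unfolding U_set_def un by blast
    then have "i \<le> uu n lam T l t j" using marked_region[OF l1, of n lam T t]
      unfolding region_def is_box_def by auto
    then show "x \<le> key n lam \<pi> l k" using I[of j i] ji unfolding is_box_def by auto
  qed
  have fin: "finite (U_set n lam T l k)"
  proof -
    have "U_set n lam T l k \<subseteq> (\<lambda>(j,i). T j i) ` ({1..lam 1} \<times> {1..n})"
      unfolding U_set_def is_box_def using zeta_le_n[of n lam] by (force intro: order_trans)
    then show ?thesis using finite_subset by blast
  qed
  have "mU n lam T l k \<le> key n lam \<pi> l k"
  proof (cases "U_set n lam T l k = {}")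
    case True
    then show ?thesis unfolding mU_def using K1'[OF perm k1 kp] by simp
  next
    case False
    then show ?thesis unfolding mU_def using Ubd fin by simp
  qed
  then show False using lk(2) by simp
qed

end
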